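(* The singular locus $\operatorname{Sing}(\widetilde{\mathfrak I})$ of the left ideal $\widetilde{\mathfrak I}$ of $\widetilde D_m$ generated by $\widetilde\ell_1,\dots,\widetilde\ell_m$ is contained in $S(z)=\{z\in\mathbb C^m\mid z_1\cdots z_m R(z)=0\}$.
   Context: $\widetilde D_m=\mathbb C\langle z_1,\dots,z_m,\widetilde\partial_1,\dots,\widetilde\partial_m\rangle$ is the Weyl algebra ($\widetilde\partial_k=\partial/\partial z_k$). For parameters $a_1,\dots,a_p\in\mathbb C$, $b_{j,k}\in\mathbb C$ ($1\le j\le p-1$), $b_{p,k}=1$: $\widetilde\ell_k=\prod_{i=1}^p(\tfrac1p z_k\widetilde\partial_k+b_{i,k}-1)-z_k^p\prod_{i=1}^p(\tfrac1p\sum_{j=1}^m z_j\widetilde\partial_j+a_i)$. $R(z)=\prod_{(i_1,\dots,i_m)\in\{1,\dots,p\}^m}(1-\zeta_p^{i_1}z_1-\cdots-\zeta_p^{i_m}z_m)$, $\zeta_p=e^{2\pi\sqrt{-1}/p}$. Singular locus of a left ideal $\mathfrak J$: Zariski closure of the projection to $z$-space of $\operatorname{Ch}(\mathfrak J)\setminus\{\xi=0\}$, where $\operatorname{Ch}(\mathfrak J)$ is the common zero set in $\mathbb C^{2m}$ of the principal symbols (w.r.t. order filtration) of all elements of $\mathfrak J$. *)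

theory Defs
  imports "HOL-Analysis.Analysis"
begin

text \<open>Elements of the Weyl algebra are represented in normal-ordered form
  P = sum of c(alpha,beta) z^alpha d^beta
as coefficient functions with finite support.\<close>

type_synonym 'm mi = "'m \<Rightarrow> nat"
type_synonym 'm wop = "'m mi \<times> 'm mi \<Rightarrow> complex"

definition msupp :: "('a \<Rightarrow> complex) \<Rightarrow> 'a set" where
  "msupp P = {x. P x \<noteq> 0}"

definition wop_fin :: "('a \<Rightarrow> complex) \<Rightarrow> bool" where
  "wop_fin P \<longleftrightarrow> finite (msupp P)"

text \<open>Coefficient of z^al d^be in the product (z^a d^b)(z^c d^d) (Leibniz rule).\<close>
definition weyl_coeff :: "'m::finite mi \<Rightarrow> 'm mi \<Rightarrow> 'm mi \<Rightarrow> 'm mi \<Rightarrow> 'm mi \<Rightarrow> 'm mi \<Rightarrow> complex" where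
  "weyl_coeff a b c d al be =
     (\<Sum>\<kappa>\<in>{\<kappa>::'m mi. \<forall>i. \<kappa> i \<le> b i \<and> \<kappa> i \<le> c i}.
        if (\<forall>i. al i = a i + c i - \<kappa> i \<and> be i = b i + d i - \<kappa> i)
        then (\<Prod>i\<in>UNIV. of_nat (b i choose \<kappa> i) *
                 (of_nat (fact (c i)) / of_nat (fact (c i - \<kappa> i))))
        else 0)"

definition wmult :: "'m::finite wop \<Rightarrow> 'm wop \<Rightarrow> 'm wop" where
  "wmult P Q = (\<lambda>(al, be). \<Sum>(a, b)\<in>msupp P. \<Sum>(c, d)\<in>msupp Q.
       P (a, b) * Q (c, d) * weyl_coeff a b c d al be)"

definition wadd :: "'m wop \<Rightarrow> 'm wop \<Rightarrow> 'm wop" where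
  "wadd P Q = (\<lambda>x. P x + Q x)"

definition wsmult :: "complex \<Rightarrow> 'm wop \<Rightarrow> 'm wop" where
  "wsmult s P = (\<lambda>x. s * P x)"

definition wconst :: "complex \<Rightarrow> 'm wop" where
  "wconst s = (\<lambda>(al, be). if al = (\<lambda>_. 0) \<and> be = (\<lambda>_. 0) then s else 0)"

definition wone :: "'m wop" where "wone = wconst 1"

definition wz :: "'m \<Rightarrow> 'm wop" where
  "wz k = (\<lambda>(al, be). if al = (\<lambda>i. if i = k then 1 else 0) \<and> be = (\<lambda>_. 0) then 1 else 0)"

definition wd :: "'m \<Rightarrow> 'm wop" where
  "wd k = (\<lambda>(al, be). if al = (\<lambda>_. 0) \<and> be = (\<lambda>i. if i = k then 1 else 0) then 1 else 0)"

definition wpow :: "'m::finite wop \<Rightarrow> nat \<Rightarrow> 'm wop" where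
  "wpow P n = ((wmult P) ^^ n) wone"

definition weuler :: "'m::finite wop" where
  "weuler = (\<lambda>x. \<Sum>j\<in>UNIV. wmult (wz j) (wd j) x)"

definition ell :: "nat \<Rightarrow> (nat \<Rightarrow> complex) \<Rightarrow> (nat \<Rightarrow> 'm \<Rightarrow> complex) \<Rightarrow> 'm::finite \<Rightarrow> 'm wop" where
  "ell p a b k =
     wadd (foldr (\<lambda>i acc. wmult (wadd (wsmult (1 / of_nat p) (wmult (wz k) (wd k)))
                                       (wconst (b i k - 1))) acc) [1..<p+1] wone)
          (wsmult (-1) (wmult (wpow (wz k) p)
             (foldr (\<lambda>i acc. wmult (wadd (wsmult (1 / of_nat p) weuler) (wconst (a i))) acc)
                    [1..<p+1] wone)))"

definition gen_left_ideal :: "('m::finite \<Rightarrow> 'm wop) \<Rightarrow> 'm wop set" where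
  "gen_left_ideal L = {P. \<exists>Q. (\<forall>k. wop_fin (Q k)) \<and>
       P = (\<lambda>x. \<Sum>k\<in>UNIV. wmult (Q k) (L k) x)}"

definition weyl_ord :: "'m::finite wop \<Rightarrow> nat" where
  "weyl_ord P = Max ((\<lambda>(al, be). \<Sum>i\<in>UNIV. be i) ` msupp P)"

definition wsymbol :: "'m::finite wop \<Rightarrow> complex^'m \<Rightarrow> complex^'m \<Rightarrow> complex" where
  "wsymbol P z \<xi> = (\<Sum>(al, be)\<in>{x \<in> msupp P. (\<Sum>i\<in>UNIV. snd x i) = weyl_ord P}.
       P (al, be) * (\<Prod>i\<in>UNIV. z $ i ^ al i * \<xi> $ i ^ be i))"

definition char_var :: "'m::finite wop set \<Rightarrow> ((complex^'m) \<times> (complex^'m)) set" where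
  "char_var J = {(z, \<xi>). \<forall>P\<in>J. wsymbol P z \<xi> = 0}"

definition mpoly_eval :: "('m::finite mi \<Rightarrow> complex) \<Rightarrow> complex^'m \<Rightarrow> complex" where
  "mpoly_eval c z = (\<Sum>al\<in>msupp c. c al * (\<Prod>i\<in>UNIV. z $ i ^ al i))"

definition zariski_closure :: "(complex^'m::finite) set \<Rightarrow> (complex^'m) set" where
  "zariski_closure A = {z. \<forall>c. wop_fin c \<and> (\<forall>w\<in>A. mpoly_eval c w = 0) \<longrightarrow> mpoly_eval c z = 0}"

definition sing_locus :: "'m::finite wop set \<Rightarrow> (complex^'m) set" where
  "sing_locus J = zariski_closure {z. \<exists>\<xi>. \<xi> \<noteq> 0 \<and> (z, \<xi>) \<in> char_var J}"

definition Rpoly :: "nat \<Rightarrow> complex^'m::finite \<Rightarrow> complex" where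
  "Rpoly p z = (\<Prod>ii\<in>{ii::'m \<Rightarrow> nat. \<forall>j. ii j \<in> {1..p}}.
       1 - (\<Sum>j\<in>UNIV. cis (2 * pi / real p) ^ ii j * z $ j))"

end

theory Submission
  imports Defs
begin


definition deg_le :: "'m::finite wop \<Rightarrow> nat \<Rightarrow> bool" where
  "deg_le P n \<longleftrightarrow> wop_fin P \<and> (\<forall>x\<in>msupp P. (\<Sum>i\<in>UNIV. snd x i) \<le> n)"

definition mon :: "'m::finite mi \<times> 'm mi \<Rightarrow> complex^'m \<Rightarrow> complex^'m \<Rightarrow> complex" where
  "mon x z \<xi> = (\<Prod>i\<in>UNIV. z $ i ^ fst x i * \<xi> $ i ^ snd x i)"

definition wtop :: "nat \<Rightarrow> 'm::finite wop \<Rightarrow> complex^'m \<Rightarrow> complex^'m \<Rightarrow> complex" where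
  "wtop n P z \<xi> = (\<Sum>x\<in>{x\<in>msupp P. (\<Sum>i\<in>UNIV. snd x i) = n}. P x * mon x z \<xi>)"

lemma wtop_superset:
  assumes "finite S" "msupp P \<subseteq> S"
  shows "wtop n P z \<xi> = (\<Sum>x\<in>S. if (\<Sum>i\<in>UNIV. snd x i) = n then P x * mon x z \<xi> else 0)"
proof -
  have "wtop n P z \<xi> = (\<Sum>x\<in>msupp P. if (\<Sum>i\<in>UNIV. snd x i) = n then P x * mon x z \<xi> else 0)"
    unfolding wtop_def using assms by (simp add: sum.inter_filter finite_subset)
  also have "\<dots> = (\<Sum>x\<in>S. if (\<Sum>i\<in>UNIV. snd x i) = n then P x * mon x z \<xi> else 0)"
    by (rule sum.mono_neutral_left) (use assms in \<open>auto simp: msupp_def\<close>)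
  finally show ?thesis .
qed

lemma wsymbol_wtop:
  assumes "deg_le P n" "wtop n P z \<xi> \<noteq> 0"
  shows "wsymbol P z \<xi> = wtop n P z \<xi>"
proof -
  have fin: "finite (msupp P)" using assms(1) by (simp add: deg_le_def wop_fin_def)
  have ne: "{x\<in>msupp P. (\<Sum>i\<in>UNIV. snd x i) = n} \<noteq> {}"
    using assms(2) unfolding wtop_def by (metis sum.empty)
  have "weyl_ord P = n"
    unfolding weyl_ord_def
  proof (rule Max_eqI)
    show "finite ((\<lambda>(al, be). \<Sum>i\<in>UNIV. be i) ` msupp P)" using fin by simp
    show "y \<le> n" if "y \<in> (\<lambda>(al, be). \<Sum>i\<in>UNIV. be i) ` msupp P" for y
      using that assms(1) by (auto simp: deg_le_def)
    show "n \<in> (\<lambda>(al, be). \<Sum>i\<in>UNIV. be i) ` msupp P"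
      using ne by force
  qed
  then show ?thesis unfolding wsymbol_def wtop_def mon_def
    by (intro sum.cong) auto
qed

lemma deg_le_mono: "deg_le P n \<Longrightarrow> n \<le> m \<Longrightarrow> deg_le P m"
  by (auto simp: deg_le_def)

lemma wtop_above: "deg_le P n \<Longrightarrow> n < m \<Longrightarrow> wtop m P z \<xi> = 0"
  unfolding wtop_def deg_le_def by (auto intro!: sum.neutral)

lemma wadd_props:
  assumes "deg_le P n" "deg_le Q n"
  shows "deg_le (wadd P Q) n" "wtop m (wadd P Q) z \<xi> = wtop m P z \<xi> + wtop m Q z \<xi>"
proof -
  have fP: "finite (msupp P)" and fQ: "finite (msupp Q)" using assms by (auto simp: deg_le_def wop_fin_def)
  have sub: "msupp (wadd P Q) \<subseteq> msupp P \<union> msupp Q" by (auto simp: msupp_def wadd_def)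
  show "deg_le (wadd P Q) n" using assms sub fP fQ unfolding deg_le_def wop_fin_def
    by (meson UnE finite_UnI finite_subset subsetD)
  show "wtop m (wadd P Q) z \<xi> = wtop m P z \<xi> + wtop m Q z \<xi>"
    using sub fP fQ
    apply (simp add: wtop_superset[of "msupp P \<union> msupp Q"] sum.distrib[symmetric] wadd_def)
    by (intro sum.cong) (auto simp: algebra_simps)
qed

lemma wsmult_props:
  assumes "deg_le P n"
  shows "deg_le (wsmult c P) n" "wtop m (wsmult c P) z \<xi> = c * wtop m P z \<xi>"
proof -
  have fP: "finite (msupp P)" using assms by (auto simp: deg_le_def wop_fin_def)
  have sub: "msupp (wsmult c P) \<subseteq> msupp P" by (auto simp: msupp_def wsmult_def)
  show "deg_le (wsmult c P) n" using assms sub fP unfolding deg_le_def wop_fin_def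
    by (meson finite_subset subsetD)
  show "wtop m (wsmult c P) z \<xi> = c * wtop m P z \<xi>"
    using sub fP
    apply (simp add: wtop_superset[of "msupp P"] sum_distrib_left wsmult_def)
    by (intro sum.cong) (auto simp: algebra_simps)
qed

lemma zero_props: "deg_le (\<lambda>_. 0) n" "wtop m (\<lambda>_. 0) z \<xi> = 0"
  by (auto simp: deg_le_def wop_fin_def msupp_def wtop_def)

lemma wsum_props:
  assumes "finite A" "\<forall>j\<in>A. deg_le (F j) n"
  shows "deg_le (\<lambda>x. \<Sum>j\<in>A. F j x) n \<and> wtop m (\<lambda>x. \<Sum>j\<in>A. F j x) z \<xi> = (\<Sum>j\<in>A. wtop m (F j) z \<xi>)"
  using assms
proof (induction A rule: finite_induct)
  case empty
  then show ?case using zero_props(1)[of n] zero_props(2)[of m z \<xi>] by simp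
next
  case (insert j A)
  have e: "(\<lambda>x. \<Sum>j\<in>insert j A. F j x) = wadd (F j) (\<lambda>x. \<Sum>j\<in>A. F j x)"
    using insert by (simp add: wadd_def)
  show ?case unfolding e using insert wadd_props[of "F j" n "\<lambda>x. \<Sum>j\<in>A. F j x"] by simp
qed

lemma wconst_props: "deg_le (wconst c) 0" "wtop 0 (wconst c) z \<xi> = c"
proof -
  have sub: "msupp (wconst c) \<subseteq> {((\<lambda>_. 0), (\<lambda>_. 0))}" by (auto simp: msupp_def wconst_def split: if_splits)
  show "deg_le (wconst c) 0" using sub unfolding deg_le_def wop_fin_def
    using finite_subset by fastforce
  show "wtop 0 (wconst c) z \<xi> = c"
    using wtop_superset[OF _ sub, of 0 z \<xi>] by (simp add: mon_def) (simp add: wconst_def)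
qed

lemma wz_props: "deg_le (wz k) 0" "wtop 0 (wz k) z \<xi> = z $ k"
proof -
  have sub: "msupp (wz k) \<subseteq> {((\<lambda>i. if i = k then 1 else 0), (\<lambda>_. 0))}" by (auto simp: msupp_def wz_def split: if_splits)
  show "deg_le (wz k) 0" using sub unfolding deg_le_def wop_fin_def
    using finite_subset by fastforce
  have "(\<Prod>i\<in>UNIV. z $ i ^ (if i = k then 1 else 0)) = z $ k"
    by (simp add: if_distrib prod.delta cong: if_cong)
  then show "wtop 0 (wz k) z \<xi> = z $ k"
    using sub by (simp add: wtop_superset[of "{((\<lambda>i. if i = k then 1 else 0), (\<lambda>_. 0))}"] wz_def mon_def)
qed

lemma wd_props: "deg_le (wd k) 1" "wtop 1 (wd k) z \<xi> = \<xi> $ k"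
proof -
  have sub: "msupp (wd k) \<subseteq> {((\<lambda>_. 0), (\<lambda>i. if i = k then 1 else 0))}" by (auto simp: msupp_def wd_def split: if_splits)
  show "deg_le (wd k) 1" using sub unfolding deg_le_def wop_fin_def
    using finite_subset by fastforce
  have "(\<Prod>i\<in>UNIV. \<xi> $ i ^ (if i = k then 1 else 0)) = \<xi> $ k"
    by (simp add: if_distrib prod.delta cong: if_cong)
  then show "wtop 1 (wd k) z \<xi> = \<xi> $ k"
    using sub by (simp add: wtop_superset[of "{((\<lambda>_. 0), (\<lambda>i. if i = k then 1 else 0))}"] wd_def mon_def)
qed



lemma finite_box: "finite {f :: 'm::finite \<Rightarrow> nat. \<forall>i. f i \<le> g i}"
proof -
  have "{f :: 'm::finite \<Rightarrow> nat. \<forall>i. f i \<le> g i} = (\<Pi>\<^sub>E i\<in>UNIV. {..g i})"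
    by (auto simp: PiE_def Pi_def extensional_def)
  then show ?thesis by (simp add: finite_PiE)
qed

lemma wc_nz:
  assumes "weyl_coeff a b c d al be \<noteq> 0"
  shows "\<exists>\<kappa>. (\<forall>i. \<kappa> i \<le> b i \<and> \<kappa> i \<le> c i) \<and> (\<forall>i. al i = a i + c i - \<kappa> i \<and> be i = b i + d i - \<kappa> i)"
  using sum.not_neutral_contains_not_neutral[OF assms[unfolded weyl_coeff_def]]
  by (metis (no_types, lifting) mem_Collect_eq)

lemma wc_top:
  fixes a b c d al be :: "'m::finite mi"
  assumes "(\<Sum>i\<in>UNIV. b i) + (\<Sum>i\<in>UNIV. d i) \<le> (\<Sum>i\<in>UNIV. be i)"
  shows "weyl_coeff a b c d al be = (if al = (\<lambda>i. a i + c i) \<and> be = (\<lambda>i. b i + d i) then 1 else 0)"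
proof -
  define K where "K = {\<kappa>::'m mi. \<forall>i. \<kappa> i \<le> b i \<and> \<kappa> i \<le> c i}"
  define T where "T = (\<lambda>\<kappa>::'m mi. if (\<forall>i. al i = a i + c i - \<kappa> i \<and> be i = b i + d i - \<kappa> i)
        then (\<Prod>i\<in>UNIV. of_nat (b i choose \<kappa> i) *
                 (of_nat (fact (c i)) / of_nat (fact (c i - \<kappa> i)))) else (0::complex))"
  have fin: "finite K" unfolding K_def by (rule finite_subset[OF _ finite_box[of b]]) auto
  have z: "(\<lambda>_. 0) \<in> K" unfolding K_def by auto
  have T0: "T \<kappa> = 0" if "\<kappa> \<in> K" "\<kappa> \<noteq> (\<lambda>_. 0)" for \<kappa>
  proof (rule ccontr)
    assume "T \<kappa> \<noteq> 0"
    then have h: "\<forall>i. be i = b i + d i - \<kappa> i" unfolding T_def by (auto split: if_splits)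
    have kb: "\<forall>i. \<kappa> i \<le> b i" using that(1) unfolding K_def by auto
    have "\<forall>i. be i + \<kappa> i = b i + d i" using h kb by (metis add.commute le_add2 le_add_diff_inverse order_trans)
    then have "(\<Sum>i\<in>UNIV. be i) + (\<Sum>i\<in>UNIV. \<kappa> i) = (\<Sum>i\<in>UNIV. b i) + (\<Sum>i\<in>UNIV. d i)"
      by (simp add: sum.distrib[symmetric])
    with assms have "(\<Sum>i\<in>UNIV. \<kappa> i) = 0" by linarith
    then have "\<forall>i. \<kappa> i = 0" by simp
    then show False using that(2) by auto
  qed
  have "weyl_coeff a b c d al be = sum T K" unfolding weyl_coeff_def T_def K_def by simp
  also have "\<dots> = sum (\<lambda>\<kappa>. if \<kappa> = (\<lambda>_. 0) then T (\<lambda>_. 0) else 0) K"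
    by (rule sum.cong) (use T0 in auto)
  also have "\<dots> = T (\<lambda>_. 0)" using fin z by simp
  also have "\<dots> = (if al = (\<lambda>i. a i + c i) \<and> be = (\<lambda>i. b i + d i) then 1 else 0)"
    unfolding T_def by (auto simp: fun_eq_iff)
  finally show ?thesis .
qed

lemma wmult_eq: "wmult P Q x = (\<Sum>y\<in>msupp P. \<Sum>w\<in>msupp Q. P y * Q w * weyl_coeff (fst y) (snd y) (fst w) (snd w) (fst x) (snd x))"
  by (simp add: wmult_def case_prod_unfold)

lemma mon_add: "mon (\<lambda>i. fst y i + fst w i, \<lambda>i. snd y i + snd w i) z \<xi> = mon y z \<xi> * mon w z \<xi>"
  unfolding mon_def by (simp add: power_add prod.distrib[symmetric] algebra_simps)

lemma wmult_props:
  fixes P Q :: "'m::finite wop"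
  assumes dP: "deg_le P n" and dQ: "deg_le Q m"
  shows "deg_le (wmult P Q) (n+m)" "wtop (n+m) (wmult P Q) z \<xi> = wtop n P z \<xi> * wtop m Q z \<xi>"
proof -
  have fP: "finite (msupp P)" and fQ: "finite (msupp Q)" using assms by (auto simp: deg_le_def wop_fin_def)
  define S where "S = (\<Union>y\<in>msupp P. \<Union>w\<in>msupp Q.
     {f :: 'm mi. \<forall>i. f i \<le> fst y i + fst w i} \<times> {f :: 'm mi. \<forall>i. f i \<le> snd y i + snd w i})"
  have finS: "finite S" unfolding S_def using fP fQ by (intro finite_UN_I finite_cartesian_product finite_box)
  have nz: "\<exists>y\<in>msupp P. \<exists>w\<in>msupp Q. weyl_coeff (fst y) (snd y) (fst w) (snd w) (fst x) (snd x) \<noteq> 0"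
    if "x \<in> msupp (wmult P Q)" for x
  proof -
    have "wmult P Q x \<noteq> 0" using that by (simp add: msupp_def)
    then obtain y where y: "y \<in> msupp P" and "(\<Sum>w\<in>msupp Q. P y * Q w * weyl_coeff (fst y) (snd y) (fst w) (snd w) (fst x) (snd x)) \<noteq> 0"
      unfolding wmult_eq by (meson sum.not_neutral_contains_not_neutral)
    then obtain w where "w \<in> msupp Q" "P y * Q w * weyl_coeff (fst y) (snd y) (fst w) (snd w) (fst x) (snd x) \<noteq> 0"
      by (meson sum.not_neutral_contains_not_neutral)
    then show ?thesis using y by auto
  qed
  have sub: "msupp (wmult P Q) \<subseteq> S"
  proof
    fix x assume "x \<in> msupp (wmult P Q)"
    then obtain y w where yw: "y \<in> msupp P" "w \<in> msupp Q" and "weyl_coeff (fst y) (snd y) (fst w) (snd w) (fst x) (snd x) \<noteq> 0"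
      using nz by blast
    then obtain \<kappa> where h: "\<forall>i. fst x i = fst y i + fst w i - \<kappa> i \<and> snd x i = snd y i + snd w i - \<kappa> i"
      using wc_nz by blast
    show "x \<in> S" unfolding S_def apply (rule UN_I[OF yw(1)]) apply (rule UN_I[OF yw(2)]) using h by (cases x) auto
  qed
  show "deg_le (wmult P Q) (n+m)"
    unfolding deg_le_def wop_fin_def
  proof (intro conjI ballI)
    show "finite (msupp (wmult P Q))" by (rule finite_subset[OF sub finS])
    fix x assume "x \<in> msupp (wmult P Q)"
    then obtain y w where yw: "y \<in> msupp P" "w \<in> msupp Q" and "weyl_coeff (fst y) (snd y) (fst w) (snd w) (fst x) (snd x) \<noteq> 0"
      using nz by blast
    then obtain \<kappa> where "\<forall>i. snd x i = snd y i + snd w i - \<kappa> i"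
      using wc_nz by blast
    then have "(\<Sum>i\<in>UNIV. snd x i) \<le> (\<Sum>i\<in>UNIV. snd y i + snd w i)" by (intro sum_mono) auto
    also have "\<dots> = (\<Sum>i\<in>UNIV. snd y i) + (\<Sum>i\<in>UNIV. snd w i)" by (simp add: sum.distrib)
    also have "\<dots> \<le> n + m" using yw dP dQ unfolding deg_le_def by (intro add_mono) auto
    finally show "(\<Sum>i\<in>UNIV. snd x i) \<le> n + m" .
  qed
  define E where "E = (\<lambda>y w x. if (\<Sum>i\<in>UNIV. snd x i) = n + m then weyl_coeff (fst y) (snd y) (fst w) (snd w) (fst x) (snd x) * mon x z \<xi> else 0)"
  have inner: "(\<Sum>x\<in>S. E y w x) = (if (\<Sum>i\<in>UNIV. snd y i) = n then mon y z \<xi> else 0) * (if (\<Sum>i\<in>UNIV. snd w i) = m then mon w z \<xi> else 0)"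
    if y: "y \<in> msupp P" and w: "w \<in> msupp Q" for y w
  proof -
    define x0 where "x0 = ((\<lambda>i. fst y i + fst w i), (\<lambda>i. snd y i + snd w i))"
    have x0S: "x0 \<in> S" unfolding S_def x0_def using y w by auto
    have yn: "(\<Sum>i\<in>UNIV. snd y i) \<le> n" using y dP by (auto simp: deg_le_def)
    have wm: "(\<Sum>i\<in>UNIV. snd w i) \<le> m" using w dQ by (auto simp: deg_le_def)
    have sx0: "(\<Sum>i\<in>UNIV. snd x0 i) = (\<Sum>i\<in>UNIV. snd y i) + (\<Sum>i\<in>UNIV. snd w i)"
      unfolding x0_def by (simp add: sum.distrib)
    have "E y w x = (if x = x0 then (if (\<Sum>i\<in>UNIV. snd x0 i) = n + m then mon x0 z \<xi> else 0) else 0)" for x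
    proof (cases "(\<Sum>i\<in>UNIV. snd x i) = n + m")
      case True
      then have "(\<Sum>i\<in>UNIV. snd y i) + (\<Sum>i\<in>UNIV. snd w i) \<le> (\<Sum>i\<in>UNIV. snd x i)" using yn wm by linarith
      from wc_top[OF this, of "fst y" "fst w" "fst x"] True show ?thesis
        unfolding E_def x0_def by (cases x) auto
    next
      case False
      then show ?thesis unfolding E_def by auto
    qed
    then have "(\<Sum>x\<in>S. E y w x) = (if (\<Sum>i\<in>UNIV. snd x0 i) = n + m then mon x0 z \<xi> else 0)"
      using finS x0S by simp
    also have "\<dots> = (if (\<Sum>i\<in>UNIV. snd y i) = n then mon y z \<xi> else 0) * (if (\<Sum>i\<in>UNIV. snd w i) = m then mon w z \<xi> else 0)"
      using yn wm unfolding sx0 by (auto simp: x0_def mon_add)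
    finally show ?thesis .
  qed
  have "wtop (n+m) (wmult P Q) z \<xi> = (\<Sum>x\<in>S. if (\<Sum>i\<in>UNIV. snd x i) = n + m then wmult P Q x * mon x z \<xi> else 0)"
    by (rule wtop_superset[OF finS sub])
  also have "\<dots> = (\<Sum>x\<in>S. \<Sum>y\<in>msupp P. \<Sum>w\<in>msupp Q. P y * Q w * E y w x)"
    unfolding wmult_eq E_def by (intro sum.cong refl) (auto simp: sum_distrib_left mult_ac)
  also have "\<dots> = (\<Sum>y\<in>msupp P. \<Sum>x\<in>S. \<Sum>w\<in>msupp Q. P y * Q w * E y w x)" by (rule sum.swap)
  also have "\<dots> = (\<Sum>y\<in>msupp P. \<Sum>w\<in>msupp Q. \<Sum>x\<in>S. P y * Q w * E y w x)" by (rule sum.cong[OF refl], rule sum.swap)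
  also have "\<dots> = (\<Sum>y\<in>msupp P. \<Sum>w\<in>msupp Q. P y * Q w * (\<Sum>x\<in>S. E y w x))"
    by (simp add: sum_distrib_left)
  also have "\<dots> = (\<Sum>y\<in>msupp P. \<Sum>w\<in>msupp Q. (if (\<Sum>i\<in>UNIV. snd y i) = n then P y * mon y z \<xi> else 0) * (if (\<Sum>i\<in>UNIV. snd w i) = m then Q w * mon w z \<xi> else 0))"
    by (intro sum.cong refl) (simp add: inner)
  also have "\<dots> = wtop n P z \<xi> * wtop m Q z \<xi>"
    by (simp add: wtop_superset[OF fP order_refl] wtop_superset[OF fQ order_refl] sum_product)
  finally show "wtop (n+m) (wmult P Q) z \<xi> = wtop n P z \<xi> * wtop m Q z \<xi>" .
qed



lemma zd_gen: "deg_le (wmult (wz k) (wd j)) 1"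
  using wmult_props(1)[OF wz_props(1)[of k] wd_props(1)[of j]] by simp

lemma zt_gen: "wtop 1 (wmult (wz k) (wd j)) z \<xi> = z $ k * \<xi> $ j"
  using wmult_props(2)[where z=z and \<xi>=\<xi>, OF wz_props(1)[of k] wd_props(1)[of j]] wz_props(2)[of k z \<xi>] wd_props(2)[of j z \<xi>] by simp

lemma wone_props: "deg_le wone 0" "wtop 0 wone z \<xi> = 1"
  unfolding wone_def by (rule wconst_props)+

lemma wpow_props: "deg_le (wpow (wz k) n) 0 \<and> wtop 0 (wpow (wz k) n) z \<xi> = z $ k ^ n"
proof (induction n)
  case 0
  then show ?case by (simp add: wpow_def wone_props)
next
  case (Suc n)
  have e: "wpow (wz k) (Suc n) = wmult (wz k) (wpow (wz k) n)" by (simp add: wpow_def)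
  show ?case unfolding e using wmult_props(1)[OF wz_props(1) conjunct1[OF Suc]]
     wmult_props(2)[where z=z and \<xi>=\<xi>, OF wz_props(1) conjunct1[OF Suc]] Suc
    by (simp add: wz_props)
qed

lemma foldr_props:
  assumes "\<forall>i\<in>set xs. deg_le (G i) 1"
  shows "deg_le (foldr (\<lambda>i acc. wmult (G i) acc) xs wone) (length xs) \<and>
         wtop (length xs) (foldr (\<lambda>i acc. wmult (G i) acc) xs wone) z \<xi> = (\<Prod>i\<leftarrow>xs. wtop 1 (G i) z \<xi>)"
  using assms
proof (induction xs)
  case Nil
  then show ?case by (simp add: wone_props)
next
  case (Cons x xs)
  then have d: "deg_le (G x) 1" and IH: "deg_le (foldr (\<lambda>i acc. wmult (G i) acc) xs wone) (length xs) \<and>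
         wtop (length xs) (foldr (\<lambda>i acc. wmult (G i) acc) xs wone) z \<xi> = (\<Prod>i\<leftarrow>xs. wtop 1 (G i) z \<xi>)"
    by auto
  show ?case using wmult_props(1)[OF d conjunct1[OF IH]] wmult_props(2)[where z=z and \<xi>=\<xi>, OF d conjunct1[OF IH]] IH by simp
qed

lemma foldr_const:
  assumes "\<forall>i. deg_le (G i) 1" "\<forall>i. wtop 1 (G i) z \<xi> = c"
  shows "deg_le (foldr (\<lambda>i acc. wmult (G i) acc) xs wone) (length xs) \<and>
         wtop (length xs) (foldr (\<lambda>i acc. wmult (G i) acc) xs wone) z \<xi> = c ^ length xs"
proof -
  have "(\<Prod>i\<leftarrow>xs. wtop 1 (G i) z \<xi>) = c ^ length xs" using assms(2) by (induction xs) auto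
  then show ?thesis using foldr_props[of xs G z \<xi>] assms(1) by simp
qed

lemma weuler_props: "deg_le (weuler :: 'm::finite wop) 1" "wtop 1 (weuler :: 'm wop) z \<xi> = (\<Sum>j\<in>UNIV. z $ j * \<xi> $ j)"
proof -
  have d: "\<forall>j\<in>(UNIV::'m set). deg_le (wmult (wz j) (wd j)) 1"
    using zd_gen by blast
  have t: "wtop 1 (wmult (wz j) (wd j)) z \<xi> = z $ j * \<xi> $ j" for j :: 'm
    by (rule zt_gen)
  show "deg_le (weuler :: 'm::finite wop) 1" "wtop 1 (weuler :: 'm wop) z \<xi> = (\<Sum>j\<in>UNIV. z $ j * \<xi> $ j)"
    using wsum_props[OF finite_class.finite_UNIV d, where m=1 and z=z and \<xi>=\<xi>] unfolding weuler_def by (simp_all add: t t[unfolded One_nat_def])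
qed

lemma ell_props:
  fixes k :: "'m::finite"
  shows "deg_le (ell p a b k) p"
    "wtop p (ell p a b k) z \<xi> = (1 / of_nat p * (z $ k * \<xi> $ k)) ^ p
        + (-1) * (z $ k ^ p * (1 / of_nat p * (\<Sum>j\<in>UNIV. z $ j * \<xi> $ j)) ^ p)"
proof -
  define G1 where "G1 = (\<lambda>i. wadd (wsmult (1 / of_nat p) (wmult (wz k) (wd k))) (wconst (b i k - 1)))"
  define G2 where "G2 = (\<lambda>i. wadd (wsmult (1 / of_nat p) (weuler :: 'm wop)) (wconst (a i)))"
  have zd: "deg_le (wmult (wz k) (wd k)) 1" by (rule zd_gen)
  have zt: "wtop 1 (wmult (wz k) (wd k)) z \<xi> = z $ k * \<xi> $ k" by (rule zt_gen)
  have cd: "deg_le (wconst c) 1" for c using deg_le_mono[OF wconst_props(1)] by simp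
  have ct: "wtop 1 (wconst c) z \<xi> = 0" for c by (rule wtop_above[OF wconst_props(1)]) simp
  have G1d: "deg_le (G1 i) 1" for i unfolding G1_def by (intro wadd_props(1) wsmult_props(1) zd cd)
  have G1t: "wtop 1 (G1 i) z \<xi> = 1 / of_nat p * (z $ k * \<xi> $ k)" for i
    unfolding G1_def by (simp add: wadd_props(2)[OF wsmult_props(1)[OF zd] cd] wsmult_props(2)[OF zd] zt ct zt[unfolded One_nat_def] ct[unfolded One_nat_def])
  have G2d: "deg_le (G2 i) 1" for i unfolding G2_def by (intro wadd_props(1) wsmult_props(1) weuler_props cd)
  have G2t: "wtop 1 (G2 i) z \<xi> = 1 / of_nat p * (\<Sum>j\<in>UNIV. z $ j * \<xi> $ j)" for i
    unfolding G2_def by (simp add: wadd_props(2)[OF wsmult_props(1)[OF weuler_props(1)] cd]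
        wsmult_props(2)[OF weuler_props(1)] weuler_props(2) ct weuler_props(2)[unfolded One_nat_def] ct[unfolded One_nat_def])
  have F1: "deg_le (foldr (\<lambda>i acc. wmult (G1 i) acc) [1..<p+1] wone) p \<and>
      wtop p (foldr (\<lambda>i acc. wmult (G1 i) acc) [1..<p+1] wone) z \<xi> = (1 / of_nat p * (z $ k * \<xi> $ k)) ^ p"
    using foldr_const[of G1 z \<xi> "1 / of_nat p * (z $ k * \<xi> $ k)" "[1..<p+1]"] G1d G1t by (simp del: upt_Suc)
  have F2: "deg_le (foldr (\<lambda>i acc. wmult (G2 i) acc) [1..<p+1] wone) p \<and>
      wtop p (foldr (\<lambda>i acc. wmult (G2 i) acc) [1..<p+1] wone) z \<xi> = (1 / of_nat p * (\<Sum>j\<in>UNIV. z $ j * \<xi> $ j)) ^ p"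
    using foldr_const[of G2 z \<xi> "1 / of_nat p * (\<Sum>j\<in>UNIV. z $ j * \<xi> $ j)" "[1..<p+1]"] G2d G2t by (simp del: upt_Suc)
  have wp: "deg_le (wpow (wz k) p) 0" "wtop 0 (wpow (wz k) p) z \<xi> = z$k^p" using wpow_props[of k p z \<xi>] by auto
  have M: "deg_le (wmult (wpow (wz k) p) (foldr (\<lambda>i acc. wmult (G2 i) acc) [1..<p+1] wone)) p"
     "wtop p (wmult (wpow (wz k) p) (foldr (\<lambda>i acc. wmult (G2 i) acc) [1..<p+1] wone)) z \<xi>
        = z $ k ^ p * (1 / of_nat p * (\<Sum>j\<in>UNIV. z $ j * \<xi> $ j)) ^ p"
    using wmult_props(1)[OF wp(1) conjunct1[OF F2]]
      wmult_props(2)[where z=z and \<xi>=\<xi>, OF wp(1) conjunct1[OF F2]] wp(2) F2 by (simp_all del: upt_Suc)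
  have e: "ell p a b k = wadd (foldr (\<lambda>i acc. wmult (G1 i) acc) [1..<p+1] wone)
      (wsmult (-1) (wmult (wpow (wz k) p) (foldr (\<lambda>i acc. wmult (G2 i) acc) [1..<p+1] wone)))"
    unfolding ell_def G1_def G2_def by simp
  show "deg_le (ell p a b k) p" unfolding e
    by (intro wadd_props(1) wsmult_props(1) M conjunct1[OF F1])
  show "wtop p (ell p a b k) z \<xi> = (1 / of_nat p * (z $ k * \<xi> $ k)) ^ p
        + (-1) * (z $ k ^ p * (1 / of_nat p * (\<Sum>j\<in>UNIV. z $ j * \<xi> $ j)) ^ p)"
    unfolding e
    apply (subst wadd_props(2)[OF conjunct1[OF F1] wsmult_props(1)[OF M(1)]])
    apply (subst wsmult_props(2)[OF M(1)])
    using F1 M(2) by (simp del: upt_Suc)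
qed



definition polyrep :: "(complex^'m::finite \<Rightarrow> complex) \<Rightarrow> bool" where
  "polyrep F \<longleftrightarrow> (\<exists>P::'m wop. deg_le P 0 \<and> (\<forall>z \<xi>. wtop 0 P z \<xi> = F z))"

lemma polyrep_const: "polyrep (\<lambda>z. c)"
  unfolding polyrep_def using wconst_props by blast

lemma polyrep_var: "polyrep (\<lambda>z. z $ k)"
  unfolding polyrep_def using wz_props by blast

lemma polyrep_add: "polyrep F \<Longrightarrow> polyrep G \<Longrightarrow> polyrep (\<lambda>z. F z + G z)"
  unfolding polyrep_def using wadd_props by metis

lemma polyrep_mult: "polyrep F \<Longrightarrow> polyrep G \<Longrightarrow> polyrep (\<lambda>z. F z * G z)"
  unfolding polyrep_def using wmult_props by (metis add_0)

lemma polyrep_sum: "finite A \<Longrightarrow> (\<forall>j\<in>A. polyrep (F j)) \<Longrightarrow> polyrep (\<lambda>z. \<Sum>j\<in>A. F j z)"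
proof (induction A rule: finite_induct)
  case empty
  then show ?case using polyrep_const[of 0] by simp
next
  case (insert x A)
  then show ?case using polyrep_add[of "F x" "\<lambda>z. \<Sum>j\<in>A. F j z"] by simp
qed

lemma polyrep_prod: "finite A \<Longrightarrow> (\<forall>j\<in>A. polyrep (F j)) \<Longrightarrow> polyrep (\<lambda>z. \<Prod>j\<in>A. F j z)"
proof (induction A rule: finite_induct)
  case empty
  then show ?case using polyrep_const[of 1] by simp
next
  case (insert x A)
  then show ?case using polyrep_mult[of "F x" "\<lambda>z. \<Prod>j\<in>A. F j z"] by simp
qed

lemma mpoly_eval_wtop:
  fixes P :: "'m::finite wop"
  assumes "deg_le P 0"
  shows "wop_fin (\<lambda>al. P (al, \<lambda>_. 0)) \<and> mpoly_eval (\<lambda>al. P (al, \<lambda>_. 0)) z = wtop 0 P z \<xi>"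
proof -
  let ?c = "\<lambda>al. P (al, \<lambda>_. 0)"
  let ?h = "\<lambda>al::'m mi. (al, (\<lambda>_::'m. 0::nat))"
  have fP: "finite (msupp P)" using assms by (auto simp: deg_le_def wop_fin_def)
  have b0: "(\<forall>i. b i = (0::nat)) \<longleftrightarrow> b = (\<lambda>_. 0)" for b :: "'m mi" by auto
  have inj: "inj ?h" by (auto simp: inj_on_def)
  have im: "{x\<in>msupp P. (\<Sum>i\<in>UNIV. snd x i) = 0} = ?h ` msupp ?c"
    by (auto simp: msupp_def image_iff b0)
  have "finite {x\<in>msupp P. (\<Sum>i\<in>UNIV. snd x i) = 0}" using fP by simp
  then have "finite (?h ` msupp ?c)" by (simp only: im)
  then have fc: "finite (msupp ?c)" using finite_imageD[OF _ inj_on_subset[OF inj subset_UNIV]] by blast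
  have "wtop 0 P z \<xi> = (\<Sum>x\<in>?h ` msupp ?c. P x * mon x z \<xi>)" unfolding wtop_def im ..
  also have "\<dots> = (\<Sum>al\<in>msupp ?c. P (?h al) * mon (?h al) z \<xi>)"
    by (rule sum.reindex[OF inj_on_subset[OF inj subset_UNIV], unfolded comp_def])
  also have "\<dots> = mpoly_eval ?c z" unfolding mpoly_eval_def mon_def by simp
  finally show ?thesis using fc by (simp add: wop_fin_def)
qed

lemma root_lemma:
  fixes w s :: complex
  assumes p: "p \<ge> 1" and e: "w ^ p = s ^ p" and s: "s \<noteq> 0"
  shows "\<exists>i\<in>{1..p}. w = cis (2 * pi / real p) ^ i * s"
proof -
  have "(w / s) ^ p = 1" using e s by (simp add: power_divide)
  then have "w / s \<in> {exp(2 * of_real pi * \<i> * of_nat j / of_nat p) | j. j < p}"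
    using complex_roots_unity[OF p] by blast
  then obtain j where j: "j < p" "w / s = exp(2 * of_real pi * \<i> * of_nat j / of_nat p)" by blast
  have c: "cis (2 * pi / real p) ^ j = exp(2 * of_real pi * \<i> * of_nat j / of_nat p)"
  proof -
    have "cis (2 * pi / real p) ^ j = cis (real j * (2 * pi / real p))" by (simp add: Complex.DeMoivre)
    also have "\<dots> = exp (\<i> * complex_of_real (real j * (2 * pi / real p)))" by (rule cis_conv_exp)
    also have "\<dots> = exp(2 * of_real pi * \<i> * of_nat j / of_nat p)" using p by (simp add: field_simps)
    finally show ?thesis .
  qed
  have cp: "cis (2 * pi / real p) ^ p = 1" using p by (simp add: Complex.DeMoivre)
  show ?thesis
  proof (cases "j = 0")
    case True
    then have "w = s" using j s by (simp add: field_simps)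
    then show ?thesis using cp p by (intro bexI[of _ p]) auto
  next
    case False
    then have "w = cis (2 * pi / real p) ^ j * s" using j c s by (simp add: field_simps)
    then show ?thesis using False j by (intro bexI[of _ j]) auto
  qed
qed



lemma finite_II: "finite {ii::'m::finite \<Rightarrow> nat. \<forall>j. ii j \<in> {1..p}}"
  by (rule finite_subset[OF _ finite_box[of "\<lambda>_. p"]]) auto

lemma polyrep_diff: "polyrep F \<Longrightarrow> polyrep G \<Longrightarrow> polyrep (\<lambda>z. F z - G z)"
  using polyrep_add[of F "\<lambda>z. (-1) * G z"] polyrep_mult[OF polyrep_const[of "-1"], of G] by simp

lemma aux:
  fixes c x y s :: complex
  assumes "(c * (x * y)) ^ p + - 1 * (x ^ p * (c * s) ^ p) = 0" "c \<noteq> 0" "x \<noteq> 0"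
  shows "y ^ p = s ^ p"
proof -
  have "(c ^ p * x ^ p) * y ^ p = (c ^ p * x ^ p) * s ^ p"
    using assms(1) by (simp add: power_mult_distrib algebra_simps)
  moreover have "c ^ p * x ^ p \<noteq> 0" using assms(2,3) by simp
  ultimately show ?thesis by (cases "p = 0") auto
qed

lemma core:
  fixes z \<xi> :: "complex^'m::finite"
  assumes p: "p \<ge> 1" and zn: "(\<Prod>i\<in>UNIV. z $ i) \<noteq> 0" and R: "Rpoly p z \<noteq> 0" and xn: "\<xi> \<noteq> 0"
  shows "\<exists>k. (1 / of_nat p * (z $ k * \<xi> $ k)) ^ p
        + (-1) * (z $ k ^ p * (1 / of_nat p * (\<Sum>j\<in>UNIV. z $ j * \<xi> $ j)) ^ p) \<noteq> 0"
proof (rule ccontr)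
  assume "\<not> ?thesis"
  then have H: "(1 / of_nat p * (z $ k * \<xi> $ k)) ^ p
        + (-1) * (z $ k ^ p * (1 / of_nat p * (\<Sum>j\<in>UNIV. z $ j * \<xi> $ j)) ^ p) = 0" for k
    by blast
  define s where "s = (\<Sum>j\<in>UNIV. z $ j * \<xi> $ j)"
  have zk: "z $ k \<noteq> 0" for k using zn by (simp add: prod_zero_iff) 
  have E: "\<xi> $ k ^ p = s ^ p" for k
    using aux[OF H[of k, folded s_def]] zk[of k] p by simp
  show False
  proof (cases "s = 0")
    case True
    have p0: "0 < p" using p by simp
    have "\<xi> $ k ^ p = 0" for k using E[of k] True p0 by (simp add: power_0_left)
    then have "\<xi> $ k = 0" for k using p0 by simp
    then have "\<xi> = 0" by (simp add: vec_eq_iff)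
    then show False using xn by simp
  next
    case False
    have ex: "\<forall>k. \<exists>i. i \<in> {1..p} \<and> \<xi> $ k = cis (2 * pi / real p) ^ i * s"
      using root_lemma[OF p E False] by blast
    then obtain ii where ii: "\<And>k. ii k \<in> {1..p} \<and> \<xi> $ k = cis (2 * pi / real p) ^ ii k * s"
      using choice[OF ex] by blast
    have "s = (\<Sum>j\<in>UNIV. z $ j * \<xi> $ j)" by (rule s_def)
    also have "\<dots> = (\<Sum>j\<in>UNIV. z $ j * (cis (2 * pi / real p) ^ ii j * s))"
      by (intro sum.cong refl) (metis ii)
    also have "\<dots> = s * (\<Sum>j\<in>UNIV. cis (2 * pi / real p) ^ ii j * z $ j)"
      by (simp add: sum_distrib_left mult_ac)
    finally have "s * (1 - (\<Sum>j\<in>UNIV. cis (2 * pi / real p) ^ ii j * z $ j)) = 0"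
      by (simp add: algebra_simps)
    then have f0: "1 - (\<Sum>j\<in>UNIV. cis (2 * pi / real p) ^ ii j * z $ j) = 0" using False by simp
    have "ii \<in> {ii::'m \<Rightarrow> nat. \<forall>j. ii j \<in> {1..p}}" using ii by blast
    then have "Rpoly p z = 0" unfolding Rpoly_def
      by (intro prod_zero[OF finite_II] bexI[of _ ii]) (use f0 in auto)
    then show False using R by simp
  qed
qed

lemma ideal_elem:
  fixes k :: "'m::finite" and p :: nat and a :: "nat \<Rightarrow> complex" and b :: "nat \<Rightarrow> 'm \<Rightarrow> complex"
  defines "Pk \<equiv> (\<lambda>x. \<Sum>k'\<in>UNIV. wmult (if k' = k then wone else (\<lambda>_. 0)) (ell p a b k') x)"
  shows "Pk \<in> gen_left_ideal (ell p a b)" "deg_le Pk p" "wtop p Pk z \<xi> = wtop p (ell p a b k) z \<xi>"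
proof -
  have w00: "deg_le (wone :: 'm wop) 0" by (rule wone_props(1))
  have w0: "wop_fin (wone :: 'm wop)" using w00 by (simp add: deg_le_def)
  have z0: "wop_fin (\<lambda>_::'m mi \<times> 'm mi. 0::complex)" by (simp add: wop_fin_def msupp_def)
  show "Pk \<in> gen_left_ideal (ell p a b)"
    unfolding gen_left_ideal_def Pk_def
    by (rule CollectI, rule exI[of _ "\<lambda>k'. if k' = k then wone else (\<lambda>_. 0)"], intro conjI allI) (simp_all add: w0 z0)
  have m0: "wmult (\<lambda>_. 0) Q x = 0" for Q :: "'m wop" and x by (simp add: wmult_eq msupp_def)
  have e: "Pk = wmult wone (ell p a b k)"
  proof
    fix x
    have "Pk x = (\<Sum>k'\<in>UNIV. if k' = k then wmult wone (ell p a b k) x else 0)"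
      unfolding Pk_def by (intro sum.cong refl) (simp add: m0)
    then show "Pk x = wmult wone (ell p a b k) x" by simp
  qed
  show "deg_le Pk p" unfolding e using wmult_props(1)[OF wone_props(1) ell_props(1)] by simp
  show "wtop p Pk z \<xi> = wtop p (ell p a b k) z \<xi>" unfolding e
    using wmult_props(2)[where z=z and \<xi>=\<xi>, OF wone_props(1) ell_props(1)[of p a b k]] by (simp add: wone_props)
qed

theorem mainTheorem12:
  fixes p :: nat and a :: "nat \<Rightarrow> complex" and b :: "nat \<Rightarrow> 'm::finite \<Rightarrow> complex"
  assumes "p \<ge> 1" and "\<forall>k. b p k = 1"
  shows "sing_locus (gen_left_ideal (ell p a b))
           \<subseteq> {z :: complex^'m. (\<Prod>i\<in>UNIV. z $ i) * Rpoly p z = 0}"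
proof -
  define J where "J = gen_left_ideal (ell p a b)"
  define A where "A = {z. \<exists>\<xi>. \<xi> \<noteq> 0 \<and> (z, \<xi>) \<in> char_var J}"
  have AS: "(\<Prod>i\<in>UNIV. w $ i) * Rpoly p w = 0" if "w \<in> A" for w
  proof (rule ccontr)
    assume nz: "(\<Prod>i\<in>UNIV. w $ i) * Rpoly p w \<noteq> 0"
    have "\<exists>\<xi>. \<xi> \<noteq> 0 \<and> (w, \<xi>) \<in> char_var J" using that by (simp add: A_def)
    then obtain \<xi> where xn: "\<xi> \<noteq> 0" and cv: "(w, \<xi>) \<in> char_var J" by blast
    have n1: "(\<Prod>i\<in>UNIV. w $ i) \<noteq> 0" and n2: "Rpoly p w \<noteq> 0" using nz by auto
    obtain k where k: "(1 / of_nat p * (w $ k * \<xi> $ k)) ^ p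
        + (-1) * (w $ k ^ p * (1 / of_nat p * (\<Sum>j\<in>UNIV. w $ j * \<xi> $ j)) ^ p) \<noteq> 0"
      using core[OF assms(1) n1 n2 xn] by blast
    define Pk where "Pk = (\<lambda>x. \<Sum>k'\<in>UNIV. wmult (if k' = k then wone else (\<lambda>_. 0)) (ell p a b k') x)"
    have t: "wtop p Pk w \<xi> \<noteq> 0" using k unfolding Pk_def ideal_elem(3) ell_props(2) .
    have "wsymbol Pk w \<xi> = wtop p Pk w \<xi>"
      by (rule wsymbol_wtop[OF _ t]) (unfold Pk_def, rule ideal_elem(2))
    moreover have "\<forall>P\<in>J. wsymbol P w \<xi> = 0" using cv unfolding char_var_def by simp
    moreover have "Pk \<in> J" unfolding J_def Pk_def by (rule ideal_elem(1))
    ultimately have "wsymbol Pk w \<xi> = 0" "wsymbol Pk w \<xi> = wtop p Pk w \<xi>" by auto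
    then show False using t by simp
  qed
  have pr: "polyrep (\<lambda>z::complex^'m. (\<Prod>i\<in>UNIV. z $ i) * Rpoly p z)"
  proof -
    have f1: "polyrep (\<lambda>z::complex^'m. \<Prod>i\<in>UNIV. z $ i)"
      by (rule polyrep_prod) (auto intro: polyrep_var)
    have f3: "polyrep (\<lambda>z::complex^'m. 1 - (\<Sum>j\<in>UNIV. cis (2 * pi / real p) ^ ii j * z $ j))" for ii :: "'m \<Rightarrow> nat"
      by (intro polyrep_diff polyrep_const polyrep_sum finite_class.finite_UNIV ballI polyrep_mult polyrep_var)
    have f2: "polyrep (\<lambda>z::complex^'m. Rpoly p z)" unfolding Rpoly_def
      by (rule polyrep_prod[OF finite_II]) (use f3 in blast)
    show ?thesis by (rule polyrep_mult[OF f1 f2])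
  qed
  then obtain P :: "'m wop" where dP: "deg_le P 0" and tP: "\<And>z \<xi>. wtop 0 P z \<xi> = (\<Prod>i\<in>UNIV. z $ i) * Rpoly p z"
    unfolding polyrep_def by blast
  show ?thesis
  proof
    fix z assume "z \<in> sing_locus (gen_left_ideal (ell p a b))"
    then have "z \<in> zariski_closure A" unfolding sing_locus_def A_def J_def by simp
    then have H: "\<forall>c. wop_fin c \<and> (\<forall>w\<in>A. mpoly_eval c w = 0) \<longrightarrow> mpoly_eval c z = 0"
      unfolding zariski_closure_def by simp
    have ev: "mpoly_eval (\<lambda>al. P (al, \<lambda>_. 0)) w = (\<Prod>i\<in>UNIV. w $ i) * Rpoly p w" for w
      using mpoly_eval_wtop[OF dP, of w 0] tP by simp
    have "wop_fin (\<lambda>al. P (al, \<lambda>_. 0))" using mpoly_eval_wtop[OF dP] by blast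
    moreover have "\<forall>w\<in>A. mpoly_eval (\<lambda>al. P (al, \<lambda>_. 0)) w = 0" using AS ev by simp
    ultimately have "mpoly_eval (\<lambda>al. P (al, \<lambda>_. 0)) z = 0" using H by blast
    then show "z \<in> {z. (\<Prod>i\<in>UNIV. z $ i) * Rpoly p z = 0}" using ev by simp
  qed
qed

end
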